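(* Let $\mathcal S$ be a triangulated category with a good metric $\mathcal M=\{B_n\}_n$. Let $\mathbf E=(E_n,e_n)_n$ be a Cauchy sequence compactly supported at $s\in\mathbb N$, and $E:=\operatorname{moco}\mathbf E$. Let $\mathbf F=(F_n,f_n)_n$ be any sequence in $\mathcal S$ with $F_n\in B_s^\perp$ for all $n$. If $E\cong\operatorname{moco}\mathbf F$, then $E$ is, in $\mathrm{Mod}\text{-}\mathcal S$, a direct summand of $\operatorname{Hom}_{\mathcal S}(-,X)$ for some $X\in\mathcal S$.
   Context: $\mathrm{Mod}\text{-}\mathcal S$ is the category of additive functors $\mathcal S^{op}\to\mathrm{Ab}$. For a sequence $\mathbf E=(E_n,e_n)$ (diagram $E_1\xrightarrow{e_1}E_2\to\cdots$), $\operatorname{moco}\mathbf E:=\varinjlim_n\operatorname{Hom}_{\mathcal S}(-,E_n)$ in $\mathrm{Mod}\text{-}\mathcal S$. Good metric: chain $B_1\supseteq B_2\supseteq\cdots$ of full subcategories each containing $0$, extension closed, $\Sigma^{-1}B_{n+1}\cup B_{n+1}\cup\Sigma B_{n+1}\subseteq B_n$. $\mathbf E$ is Cauchy if for every $m$, $\mathrm{cone}(e_n)\in B_m$ for all large $n$; it is compactly supported at $s$ if $\operatorname{moco}\mathbf E$ vanishes on all objects of $B_s$. $B_s^\perp=\{Y\in\mathcal S:\operatorname{Hom}(B,Y)=0\ \forall B\in B_s\}$. *)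

theory Defs
  imports Main
begin

text \<open>A (small) category is given by an object set, hom-sets (each morphism has a unique
 source and target), composition (cmp g f = g o f) and identities.\<close>

record ('o,'m) tcat =
  Ob :: "'o set"
  Hom :: "'o \<Rightarrow> 'o \<Rightarrow> 'm set"
  cmp :: "'m \<Rightarrow> 'm \<Rightarrow> 'm"
  idm :: "'o \<Rightarrow> 'm"
  madd :: "'m \<Rightarrow> 'm \<Rightarrow> 'm"
  mneg :: "'m \<Rightarrow> 'm"
  mzero :: "'o \<Rightarrow> 'o \<Rightarrow> 'm"
  Sh :: "'o \<Rightarrow> 'o"
  Shm :: "'m \<Rightarrow> 'm"
  Dist :: "('o \<times> 'o \<times> 'o \<times> 'm \<times> 'm \<times> 'm) set"

definition is_category :: "('o,'m,'z) tcat_scheme \<Rightarrow> bool" where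
  "is_category C \<longleftrightarrow>
     (\<forall>X Y. Hom C X Y \<noteq> {} \<longrightarrow> X \<in> Ob C \<and> Y \<in> Ob C) \<and>
     (\<forall>X Y X' Y'. Hom C X Y \<inter> Hom C X' Y' \<noteq> {} \<longrightarrow> X = X' \<and> Y = Y') \<and>
     (\<forall>X\<in>Ob C. idm C X \<in> Hom C X X) \<and>
     (\<forall>X Y Z f g. f \<in> Hom C X Y \<longrightarrow> g \<in> Hom C Y Z \<longrightarrow> cmp C g f \<in> Hom C X Z) \<and>
     (\<forall>X Y f. f \<in> Hom C X Y \<longrightarrow> cmp C (idm C Y) f = f \<and> cmp C f (idm C X) = f) \<and>
     (\<forall>W X Y Z f g h. f \<in> Hom C W X \<longrightarrow> g \<in> Hom C X Y \<longrightarrow> h \<in> Hom C Y Z \<longrightarrow>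
        cmp C h (cmp C g f) = cmp C (cmp C h g) f)"

definition is_preadditive :: "('o,'m,'z) tcat_scheme \<Rightarrow> bool" where
  "is_preadditive C \<longleftrightarrow> is_category C \<and>
     (\<forall>X\<in>Ob C. \<forall>Y\<in>Ob C.
        mzero C X Y \<in> Hom C X Y \<and>
        (\<forall>f\<in>Hom C X Y. \<forall>g\<in>Hom C X Y. madd C f g \<in> Hom C X Y \<and> madd C f g = madd C g f) \<and>
        (\<forall>f\<in>Hom C X Y. \<forall>g\<in>Hom C X Y. \<forall>h\<in>Hom C X Y.
            madd C (madd C f g) h = madd C f (madd C g h)) \<and>
        (\<forall>f\<in>Hom C X Y. madd C (mzero C X Y) f = f) \<and>
        (\<forall>f\<in>Hom C X Y. mneg C f \<in> Hom C X Y \<and> madd C f (mneg C f) = mzero C X Y)) \<and>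
     (\<forall>X Y Z f g h. f \<in> Hom C X Y \<longrightarrow> g \<in> Hom C X Y \<longrightarrow> h \<in> Hom C Y Z \<longrightarrow>
        cmp C h (madd C f g) = madd C (cmp C h f) (cmp C h g)) \<and>
     (\<forall>X Y Z f g h. h \<in> Hom C X Y \<longrightarrow> f \<in> Hom C Y Z \<longrightarrow> g \<in> Hom C Y Z \<longrightarrow>
        cmp C (madd C f g) h = madd C (cmp C f h) (cmp C g h))"

definition is_zero_obj :: "('o,'m,'z) tcat_scheme \<Rightarrow> 'o \<Rightarrow> bool" where
  "is_zero_obj C Z \<longleftrightarrow> Z \<in> Ob C \<and>
     (\<forall>X\<in>Ob C. Hom C Z X = {mzero C Z X} \<and> Hom C X Z = {mzero C X Z})"

definition is_additive :: "('o,'m,'z) tcat_scheme \<Rightarrow> bool" where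
  "is_additive C \<longleftrightarrow> is_preadditive C \<and> (\<exists>Z. is_zero_obj C Z) \<and>
     (\<forall>X\<in>Ob C. \<forall>Y\<in>Ob C. \<exists>P i1 i2 p1 p2.
        i1 \<in> Hom C X P \<and> i2 \<in> Hom C Y P \<and> p1 \<in> Hom C P X \<and> p2 \<in> Hom C P Y \<and>
        cmp C p1 i1 = idm C X \<and> cmp C p2 i2 = idm C Y \<and>
        cmp C p2 i1 = mzero C X Y \<and> cmp C p1 i2 = mzero C Y X \<and>
        madd C (cmp C i1 p1) (cmp C i2 p2) = idm C P)"

definition is_iso :: "('o,'m,'z) tcat_scheme \<Rightarrow> 'o \<Rightarrow> 'o \<Rightarrow> 'm \<Rightarrow> bool" where
  "is_iso C X Y f \<longleftrightarrow> f \<in> Hom C X Y \<and>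
     (\<exists>g\<in>Hom C Y X. cmp C g f = idm C X \<and> cmp C f g = idm C Y)"

definition is_triangle :: "('o,'m,'z) tcat_scheme \<Rightarrow> 'o \<times> 'o \<times> 'o \<times> 'm \<times> 'm \<times> 'm \<Rightarrow> bool" where
  "is_triangle C T \<longleftrightarrow> (case T of (X,Y,Z,u,v,w) \<Rightarrow>
     u \<in> Hom C X Y \<and> v \<in> Hom C Y Z \<and> w \<in> Hom C Z (Sh C X))"

definition is_triangulated :: "('o,'m,'z) tcat_scheme \<Rightarrow> bool" where
  "is_triangulated C \<longleftrightarrow> is_additive C \<and>
     \<comment> \<open>the shift is an additive automorphism\<close>
     bij_betw (Sh C) (Ob C) (Ob C) \<and>
     (\<forall>X\<in>Ob C. \<forall>Y\<in>Ob C. bij_betw (Shm C) (Hom C X Y) (Hom C (Sh C X) (Sh C Y))) \<and>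
     (\<forall>X\<in>Ob C. Shm C (idm C X) = idm C (Sh C X)) \<and>
     (\<forall>X Y Z f g. f \<in> Hom C X Y \<longrightarrow> g \<in> Hom C Y Z \<longrightarrow>
        Shm C (cmp C g f) = cmp C (Shm C g) (Shm C f)) \<and>
     (\<forall>X Y f g. f \<in> Hom C X Y \<longrightarrow> g \<in> Hom C X Y \<longrightarrow>
        Shm C (madd C f g) = madd C (Shm C f) (Shm C g)) \<and>
     \<comment> \<open>distinguished triangles are triangles\<close>
     (\<forall>T\<in>Dist C. is_triangle C T) \<and>
     \<comment> \<open>TR1: closure under isomorphism of triangles\<close>
     (\<forall>X Y Z u v w X' Y' Z' u' v' w' a b c.
        (X,Y,Z,u,v,w) \<in> Dist C \<longrightarrow> is_triangle C (X',Y',Z',u',v',w') \<longrightarrow>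
        is_iso C X X' a \<longrightarrow> is_iso C Y Y' b \<longrightarrow> is_iso C Z Z' c \<longrightarrow>
        cmp C b u = cmp C u' a \<longrightarrow> cmp C c v = cmp C v' b \<longrightarrow>
        cmp C (Shm C a) w = cmp C w' c \<longrightarrow> (X',Y',Z',u',v',w') \<in> Dist C) \<and>
     \<comment> \<open>TR1: X -> X -> 0 -> Sh X is distinguished\<close>
     (\<forall>X\<in>Ob C. \<forall>Z. is_zero_obj C Z \<longrightarrow>
        (X, X, Z, idm C X, mzero C X Z, mzero C Z (Sh C X)) \<in> Dist C) \<and>
     \<comment> \<open>TR1: every morphism sits in a distinguished triangle\<close>
     (\<forall>X Y u. u \<in> Hom C X Y \<longrightarrow> (\<exists>Z v w. (X,Y,Z,u,v,w) \<in> Dist C)) \<and>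
     \<comment> \<open>TR2: rotation\<close>
     (\<forall>X Y Z u v w. is_triangle C (X,Y,Z,u,v,w) \<longrightarrow>
        ((X,Y,Z,u,v,w) \<in> Dist C \<longleftrightarrow> (Y, Z, Sh C X, v, w, mneg C (Shm C u)) \<in> Dist C)) \<and>
     \<comment> \<open>TR3: morphisms of triangles\<close>
     (\<forall>X Y Z u v w X' Y' Z' u' v' w' a b.
        (X,Y,Z,u,v,w) \<in> Dist C \<longrightarrow> (X',Y',Z',u',v',w') \<in> Dist C \<longrightarrow>
        a \<in> Hom C X X' \<longrightarrow> b \<in> Hom C Y Y' \<longrightarrow> cmp C b u = cmp C u' a \<longrightarrow>
        (\<exists>c\<in>Hom C Z Z'. cmp C c v = cmp C v' b \<and> cmp C (Shm C a) w = cmp C w' c)) \<and>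
     \<comment> \<open>TR4: octahedral axiom\<close>
     (\<forall>X Y Z f g Q1 p1 d1 Q2 p2 d2 Q3 p3 d3.
        f \<in> Hom C X Y \<longrightarrow> g \<in> Hom C Y Z \<longrightarrow>
        (X,Y,Q1,f,p1,d1) \<in> Dist C \<longrightarrow> (X,Z,Q2,cmp C g f,p2,d2) \<in> Dist C \<longrightarrow>
        (Y,Z,Q3,g,p3,d3) \<in> Dist C \<longrightarrow>
        (\<exists>a b. (Q1,Q2,Q3,a,b,cmp C (Shm C p1) d3) \<in> Dist C \<and>
           cmp C a p1 = cmp C p2 g \<and> cmp C d2 a = d1 \<and>
           cmp C b p2 = p3 \<and> cmp C d3 b = cmp C (Shm C f) d2))"

definition ext_closed :: "('o,'m,'z) tcat_scheme \<Rightarrow> 'o set \<Rightarrow> bool" where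
  "ext_closed C B \<longleftrightarrow>
     (\<forall>X Y Z u v w. (X,Y,Z,u,v,w) \<in> Dist C \<longrightarrow> X \<in> B \<longrightarrow> Z \<in> B \<longrightarrow> Y \<in> B)"

text \<open>Indices start at 0 (the paper starts at 1; this is only a shift of indices).\<close>
definition good_metric :: "('o,'m,'z) tcat_scheme \<Rightarrow> (nat \<Rightarrow> 'o set) \<Rightarrow> bool" where
  "good_metric C B \<longleftrightarrow> (\<forall>n.
     B n \<subseteq> Ob C \<and> (\<exists>Z\<in>B n. is_zero_obj C Z) \<and> ext_closed C (B n) \<and>
     B (Suc n) \<subseteq> B n \<and>
     {X\<in>Ob C. Sh C X \<in> B (Suc n)} \<subseteq> B n \<and> Sh C ` B (Suc n) \<subseteq> B n)"

definition is_seq :: "('o,'m,'z) tcat_scheme \<Rightarrow> (nat \<Rightarrow> 'o) \<Rightarrow> (nat \<Rightarrow> 'm) \<Rightarrow> bool" where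
  "is_seq C E e \<longleftrightarrow> (\<forall>n. E n \<in> Ob C \<and> e n \<in> Hom C (E n) (E (Suc n)))"

text \<open>cone(e_n) lies in B (cones are unique up to isomorphism).\<close>
definition cone_in :: "('o,'m,'z) tcat_scheme \<Rightarrow> (nat \<Rightarrow> 'o) \<Rightarrow> (nat \<Rightarrow> 'm) \<Rightarrow> nat \<Rightarrow> 'o set \<Rightarrow> bool" where
  "cone_in C E e n B \<longleftrightarrow> (\<exists>Z v w. (E n, E (Suc n), Z, e n, v, w) \<in> Dist C \<and> Z \<in> B)"

definition is_cauchy :: "('o,'m,'z) tcat_scheme \<Rightarrow> (nat \<Rightarrow> 'o set) \<Rightarrow> (nat \<Rightarrow> 'o) \<Rightarrow> (nat \<Rightarrow> 'm) \<Rightarrow> bool" where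
  "is_cauchy C B E e \<longleftrightarrow> (\<forall>m. \<exists>N. \<forall>n\<ge>N. cone_in C E e n (B m))"

definition perp :: "('o,'m,'z) tcat_scheme \<Rightarrow> 'o set \<Rightarrow> 'o set" where
  "perp C B = {Y\<in>Ob C. \<forall>X\<in>B. Hom C X Y = {mzero C X Y}}"

record ('o,'m,'x) smod =
  modCar :: "'o \<Rightarrow> 'x set"
  modAct :: "'o \<Rightarrow> 'o \<Rightarrow> 'm \<Rightarrow> 'x \<Rightarrow> 'x"  \<comment> \<open>modAct A B f : M(B) -> M(A) for f : A -> B\<close>
  modAdd :: "'o \<Rightarrow> 'x \<Rightarrow> 'x \<Rightarrow> 'x"
  modZero :: "'o \<Rightarrow> 'x"

definition mod_hom :: "('o,'m,'z) tcat_scheme \<Rightarrow> ('o,'m,'x) smod \<Rightarrow> ('o,'m,'y) smod \<Rightarrow> ('o \<Rightarrow> 'x \<Rightarrow> 'y) \<Rightarrow> bool" where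
  "mod_hom C M N \<eta> \<longleftrightarrow> (\<forall>A\<in>Ob C.
     (\<forall>x\<in>modCar M A. \<eta> A x \<in> modCar N A) \<and>
     (\<forall>x\<in>modCar M A. \<forall>y\<in>modCar M A. \<eta> A (modAdd M A x y) = modAdd N A (\<eta> A x) (\<eta> A y)) \<and>
     (\<forall>B\<in>Ob C. \<forall>f\<in>Hom C A B. \<forall>x\<in>modCar M B.
        \<eta> A (modAct M A B f x) = modAct N A B f (\<eta> B x)))"

definition mod_iso :: "('o,'m,'z) tcat_scheme \<Rightarrow> ('o,'m,'x) smod \<Rightarrow> ('o,'m,'y) smod \<Rightarrow> bool" where
  "mod_iso C M N \<longleftrightarrow> (\<exists>\<eta> \<theta>. mod_hom C M N \<eta> \<and> mod_hom C N M \<theta> \<and>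
     (\<forall>A\<in>Ob C. \<forall>x\<in>modCar M A. \<theta> A (\<eta> A x) = x) \<and>
     (\<forall>A\<in>Ob C. \<forall>y\<in>modCar N A. \<eta> A (\<theta> A y) = y))"

definition direct_summand :: "('o,'m,'z) tcat_scheme \<Rightarrow> ('o,'m,'x) smod \<Rightarrow> ('o,'m,'y) smod \<Rightarrow> bool" where
  "direct_summand C M N \<longleftrightarrow> (\<exists>i p. mod_hom C M N i \<and> mod_hom C N M p \<and>
     (\<forall>A\<in>Ob C. \<forall>x\<in>modCar M A. p A (i A x) = x))"

definition hom_mod :: "('o,'m,'z) tcat_scheme \<Rightarrow> 'o \<Rightarrow> ('o,'m,'m) smod" where
  "hom_mod C X = \<lparr> modCar = (\<lambda>A. Hom C A X), modAct = (\<lambda>A B f g. cmp C g f),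
                   modAdd = (\<lambda>A. madd C), modZero = (\<lambda>A. mzero C A X) \<rparr>"

section \<open>moco: the colimit of Hom(-,E_n), computed objectwise\<close>

fun trd :: "('o,'m,'z) tcat_scheme \<Rightarrow> (nat \<Rightarrow> 'o) \<Rightarrow> (nat \<Rightarrow> 'm) \<Rightarrow> nat \<Rightarrow> nat \<Rightarrow> 'm" where
  "trd C E e n 0 = idm C (E n)"
| "trd C E e n (Suc d) = cmp C (e (n + d)) (trd C E e n d)"

definition trm :: "('o,'m,'z) tcat_scheme \<Rightarrow> (nat \<Rightarrow> 'o) \<Rightarrow> (nat \<Rightarrow> 'm) \<Rightarrow> nat \<Rightarrow> nat \<Rightarrow> 'm" where
  "trm C E e n k = trd C E e n (k - n)"

definition germ_rel :: "('o,'m,'z) tcat_scheme \<Rightarrow> (nat \<Rightarrow> 'o) \<Rightarrow> (nat \<Rightarrow> 'm) \<Rightarrow> 'o \<Rightarrow> nat \<times> 'm \<Rightarrow> nat \<times> 'm \<Rightarrow> bool" where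
  "germ_rel C E e A p q \<longleftrightarrow> (case p of (n,f) \<Rightarrow> case q of (m,g) \<Rightarrow>
     f \<in> Hom C A (E n) \<and> g \<in> Hom C A (E m) \<and>
     (\<exists>k\<ge>max n m. cmp C (trm C E e n k) f = cmp C (trm C E e m k) g))"

definition germ :: "('o,'m,'z) tcat_scheme \<Rightarrow> (nat \<Rightarrow> 'o) \<Rightarrow> (nat \<Rightarrow> 'm) \<Rightarrow> 'o \<Rightarrow> nat \<times> 'm \<Rightarrow> (nat \<times> 'm) set" where
  "germ C E e A p = {q. germ_rel C E e A p q}"

definition rep :: "(nat \<times> 'm) set \<Rightarrow> nat \<times> 'm" where
  "rep x = (SOME p. p \<in> x)"

definition moco :: "('o,'m,'z) tcat_scheme \<Rightarrow> (nat \<Rightarrow> 'o) \<Rightarrow> (nat \<Rightarrow> 'm) \<Rightarrow> ('o,'m,(nat \<times> 'm) set) smod" where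
  "moco C E e = \<lparr>
     modCar = (\<lambda>A. {germ C E e A (n,f) | n f. f \<in> Hom C A (E n)}),
     modAct = (\<lambda>A B h x. germ C E e A (fst (rep x), cmp C (snd (rep x)) h)),
     modAdd = (\<lambda>A x y. (let n = fst (rep x); f = snd (rep x); m = fst (rep y); g = snd (rep y);
                            k = max n m
                        in germ C E e A (k, madd C (cmp C (trm C E e n k) f) (cmp C (trm C E e m k) g)))),
     modZero = (\<lambda>A. germ C E e A (0, mzero C A (E 0))) \<rparr>"

definition compactly_supported :: "('o,'m,'z) tcat_scheme \<Rightarrow> 'o set \<Rightarrow> (nat \<Rightarrow> 'o) \<Rightarrow> (nat \<Rightarrow> 'm) \<Rightarrow> bool" where
  "compactly_supported C B E e \<longleftrightarrow>
     (\<forall>A\<in>B. modCar (moco C E e) A = {modZero (moco C E e) A})"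

end

theory Submission
  imports Defs
begin



locale TC =
  fixes C :: "('o,'m,'z) tcat_scheme"
  assumes tri: "is_triangulated C"
begin

lemma add: "is_additive C" using tri unfolding is_triangulated_def by (elim conjE) assumption
lemma pre: "is_preadditive C" using add unfolding is_additive_def by (elim conjE) assumption
lemma cat: "is_category C" using pre unfolding is_preadditive_def by (elim conjE) assumption

lemma hom_ob: assumes "f \<in> Hom C X Y" shows "X \<in> Ob C \<and> Y \<in> Ob C"
proof -
  have ne: "Hom C X Y \<noteq> {}" using assms by blast
  have h: "\<forall>X Y. Hom C X Y \<noteq> {} \<longrightarrow> X \<in> Ob C \<and> Y \<in> Ob C"
    using cat unfolding is_category_def by (elim conjE) assumption
  show ?thesis using h[rule_format, OF ne] .
qed
lemma hom_uniq: assumes "f \<in> Hom C X Y" "f \<in> Hom C X' Y'" shows "X = X' \<and> Y = Y'"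
proof -
  have ne: "Hom C X Y \<inter> Hom C X' Y' \<noteq> {}" using assms by blast
  have h: "\<forall>X Y X' Y'. Hom C X Y \<inter> Hom C X' Y' \<noteq> {} \<longrightarrow> X = X' \<and> Y = Y'"
    using cat unfolding is_category_def by (elim conjE) assumption
  show ?thesis using h[rule_format, OF ne] .
qed
lemma id_hom: assumes "X \<in> Ob C" shows "idm C X \<in> Hom C X X"
proof -
  have h: "\<forall>X\<in>Ob C. idm C X \<in> Hom C X X"
    using cat unfolding is_category_def by (elim conjE) assumption
  show ?thesis using h assms by blast
qed
lemma cmp_hom: assumes "f \<in> Hom C X Y" "g \<in> Hom C Y Z" shows "cmp C g f \<in> Hom C X Z"
proof -
  have h: "\<forall>X Y Z f g. f \<in> Hom C X Y \<longrightarrow> g \<in> Hom C Y Z \<longrightarrow> cmp C g f \<in> Hom C X Z"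
    using cat unfolding is_category_def by (elim conjE) assumption
  show ?thesis using h[rule_format, OF assms] .
qed
lemma idlr: assumes "f \<in> Hom C X Y" shows "cmp C (idm C Y) f = f \<and> cmp C f (idm C X) = f"
proof -
  have h: "\<forall>X Y f. f \<in> Hom C X Y \<longrightarrow> cmp C (idm C Y) f = f \<and> cmp C f (idm C X) = f"
    using cat unfolding is_category_def by (elim conjE) assumption
  show ?thesis using h[rule_format, OF assms] .
qed
lemma id_l: "f \<in> Hom C X Y \<Longrightarrow> cmp C (idm C Y) f = f" using idlr by blast
lemma id_r: "f \<in> Hom C X Y \<Longrightarrow> cmp C f (idm C X) = f" using idlr by blast
lemma assoc: assumes "f \<in> Hom C W X" "g \<in> Hom C X Y" "h \<in> Hom C Y Z"
  shows "cmp C h (cmp C g f) = cmp C (cmp C h g) f"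
proof -
  have h: "\<forall>W X Y Z f g h. f \<in> Hom C W X \<longrightarrow> g \<in> Hom C X Y \<longrightarrow> h \<in> Hom C Y Z \<longrightarrow>
        cmp C h (cmp C g f) = cmp C (cmp C h g) f"
    using cat unfolding is_category_def by (elim conjE) assumption
  show ?thesis using h[rule_format, OF assms] .
qed

lemma preXY: assumes "X \<in> Ob C" "Y \<in> Ob C"
  shows "mzero C X Y \<in> Hom C X Y \<and>
        (\<forall>f\<in>Hom C X Y. \<forall>g\<in>Hom C X Y. madd C f g \<in> Hom C X Y \<and> madd C f g = madd C g f) \<and>
        (\<forall>f\<in>Hom C X Y. \<forall>g\<in>Hom C X Y. \<forall>h\<in>Hom C X Y.
            madd C (madd C f g) h = madd C f (madd C g h)) \<and>
        (\<forall>f\<in>Hom C X Y. madd C (mzero C X Y) f = f) \<and>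
        (\<forall>f\<in>Hom C X Y. mneg C f \<in> Hom C X Y \<and> madd C f (mneg C f) = mzero C X Y)"
proof -
  have h: "\<forall>X\<in>Ob C. \<forall>Y\<in>Ob C.
        mzero C X Y \<in> Hom C X Y \<and>
        (\<forall>f\<in>Hom C X Y. \<forall>g\<in>Hom C X Y. madd C f g \<in> Hom C X Y \<and> madd C f g = madd C g f) \<and>
        (\<forall>f\<in>Hom C X Y. \<forall>g\<in>Hom C X Y. \<forall>h\<in>Hom C X Y.
            madd C (madd C f g) h = madd C f (madd C g h)) \<and>
        (\<forall>f\<in>Hom C X Y. madd C (mzero C X Y) f = f) \<and>
        (\<forall>f\<in>Hom C X Y. mneg C f \<in> Hom C X Y \<and> madd C f (mneg C f) = mzero C X Y)"
    using pre unfolding is_preadditive_def by (elim conjE) assumption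
  show ?thesis using bspec[OF bspec[OF h assms(1)] assms(2)] .
qed

lemma zero_hom: "X \<in> Ob C \<Longrightarrow> Y \<in> Ob C \<Longrightarrow> mzero C X Y \<in> Hom C X Y"
  using preXY by blast
lemma zero_hom': "f \<in> Hom C X Y \<Longrightarrow> mzero C X Y \<in> Hom C X Y"
  using zero_hom hom_ob by blast
lemma add_hom: assumes "f \<in> Hom C X Y" "g \<in> Hom C X Y" shows "madd C f g \<in> Hom C X Y"
  using preXY[OF hom_ob[OF assms(1), THEN conjunct1] hom_ob[OF assms(1), THEN conjunct2]] assms by blast
lemma add_comm: assumes "f \<in> Hom C X Y" "g \<in> Hom C X Y" shows "madd C f g = madd C g f"
  using preXY[OF hom_ob[OF assms(1), THEN conjunct1] hom_ob[OF assms(1), THEN conjunct2]] assms by blast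
lemma add_assoc: assumes "f \<in> Hom C X Y" "g \<in> Hom C X Y" "h \<in> Hom C X Y"
  shows "madd C (madd C f g) h = madd C f (madd C g h)"
  using preXY[OF hom_ob[OF assms(1), THEN conjunct1] hom_ob[OF assms(1), THEN conjunct2]] assms by blast
lemma zero_add: assumes "f \<in> Hom C X Y" shows "madd C (mzero C X Y) f = f"
  using preXY[OF hom_ob[OF assms(1), THEN conjunct1] hom_ob[OF assms(1), THEN conjunct2]] assms by blast
lemma neg_hom: assumes "f \<in> Hom C X Y" shows "mneg C f \<in> Hom C X Y"
  using preXY[OF hom_ob[OF assms(1), THEN conjunct1] hom_ob[OF assms(1), THEN conjunct2]] assms by blast
lemma add_neg: assumes "f \<in> Hom C X Y" shows "madd C f (mneg C f) = mzero C X Y"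
  using preXY[OF hom_ob[OF assms(1), THEN conjunct1] hom_ob[OF assms(1), THEN conjunct2]] assms by blast
lemma distl: assumes "f \<in> Hom C X Y" "g \<in> Hom C X Y" "h \<in> Hom C Y Z"
  shows "cmp C h (madd C f g) = madd C (cmp C h f) (cmp C h g)"
proof -
  have h: "\<forall>X Y Z f g h. f \<in> Hom C X Y \<longrightarrow> g \<in> Hom C X Y \<longrightarrow> h \<in> Hom C Y Z \<longrightarrow>
        cmp C h (madd C f g) = madd C (cmp C h f) (cmp C h g)"
    using pre unfolding is_preadditive_def by (elim conjE) assumption
  show ?thesis using h[rule_format, OF assms] .
qed
lemma distr: assumes "h \<in> Hom C X Y" "f \<in> Hom C Y Z" "g \<in> Hom C Y Z"
  shows "cmp C (madd C f g) h = madd C (cmp C f h) (cmp C g h)"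
proof -
  have h: "\<forall>X Y Z f g h. h \<in> Hom C X Y \<longrightarrow> f \<in> Hom C Y Z \<longrightarrow> g \<in> Hom C Y Z \<longrightarrow>
        cmp C (madd C f g) h = madd C (cmp C f h) (cmp C g h)"
    using pre unfolding is_preadditive_def by (elim conjE) assumption
  show ?thesis using h[rule_format, OF assms] .
qed

lemma add_zero: assumes "f \<in> Hom C X Y" shows "madd C f (mzero C X Y) = f"
  using add_comm[OF assms zero_hom'[OF assms]] zero_add[OF assms] by simp

lemma neg_uniq: assumes f: "f \<in> Hom C X Y" and g: "g \<in> Hom C X Y" and s: "madd C f g = mzero C X Y"
  shows "g = mneg C f"
proof -
  have n: "mneg C f \<in> Hom C X Y" using neg_hom f by blast
  have "g = madd C (mzero C X Y) g" using zero_add[OF g] by simp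
  also have "mzero C X Y = madd C (mneg C f) f" using add_neg[OF f] add_comm[OF f n] by simp
  also have "madd C (madd C (mneg C f) f) g = madd C (mneg C f) (madd C f g)" using add_assoc[OF n f g] .
  also have "\<dots> = mneg C f" using s add_zero[OF n] by simp
  finally show ?thesis .
qed

lemma idem_zero: assumes f: "f \<in> Hom C X Y" and s: "madd C f f = f" shows "f = mzero C X Y"
proof -
  have n: "mneg C f \<in> Hom C X Y" using neg_hom f by blast
  have "mzero C X Y = madd C f (mneg C f)" using add_neg[OF f] by simp
  also have "\<dots> = madd C (madd C f f) (mneg C f)" using s by simp
  also have "\<dots> = madd C f (madd C f (mneg C f))" using add_assoc[OF f f n] .
  also have "\<dots> = f" using add_neg[OF f] add_zero[OF f] by simp
  finally show ?thesis by simp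
qed

lemma neg_neg: assumes f: "f \<in> Hom C X Y" shows "mneg C (mneg C f) = f"
proof -
  have n: "mneg C f \<in> Hom C X Y" using neg_hom f by blast
  have "madd C (mneg C f) f = mzero C X Y" using add_neg[OF f] add_comm[OF f n] by simp
  thus ?thesis using neg_uniq[OF n f] by simp
qed

lemma cmp_zero_r: assumes g: "g \<in> Hom C Y Z" and X: "X \<in> Ob C" shows "cmp C g (mzero C X Y) = mzero C X Z"
proof -
  have z: "mzero C X Y \<in> Hom C X Y" using g X hom_ob zero_hom by blast
  have gz: "cmp C g (mzero C X Y) \<in> Hom C X Z" using cmp_hom[OF z g] .
  have "cmp C g (mzero C X Y) = cmp C g (madd C (mzero C X Y) (mzero C X Y))"
    using zero_add[OF z] by simp
  also have "\<dots> = madd C (cmp C g (mzero C X Y)) (cmp C g (mzero C X Y))"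
    using distl[OF z z g] .
  finally show ?thesis using idem_zero[OF gz] by simp
qed

lemma cmp_zero_l: assumes f: "f \<in> Hom C X Y" and Z: "Z \<in> Ob C" shows "cmp C (mzero C Y Z) f = mzero C X Z"
proof -
  have z: "mzero C Y Z \<in> Hom C Y Z" using f Z hom_ob zero_hom by blast
  have gz: "cmp C (mzero C Y Z) f \<in> Hom C X Z" using cmp_hom[OF f z] .
  have "cmp C (mzero C Y Z) f = cmp C (madd C (mzero C Y Z) (mzero C Y Z)) f"
    using zero_add[OF z] by simp
  also have "\<dots> = madd C (cmp C (mzero C Y Z) f) (cmp C (mzero C Y Z) f)"
    using distr[OF f z z] .
  finally show ?thesis using idem_zero[OF gz] by simp
qed

lemma cmp_neg_l: assumes f: "f \<in> Hom C Y Z" and g: "g \<in> Hom C X Y"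
  shows "cmp C (mneg C f) g = mneg C (cmp C f g)"
proof -
  have n: "mneg C f \<in> Hom C Y Z" using neg_hom f by blast
  have Z: "Z \<in> Ob C" using f hom_ob by blast
  have "madd C (cmp C f g) (cmp C (mneg C f) g) = cmp C (madd C f (mneg C f)) g"
    using distr[OF g f n] by simp
  also have "\<dots> = mzero C X Z" using add_neg[OF f] cmp_zero_l[OF g Z] by simp
  finally show ?thesis using neg_uniq[OF cmp_hom[OF g f] cmp_hom[OF g n]] by simp
qed

lemma cmp_neg_r: assumes f: "f \<in> Hom C Y Z" and g: "g \<in> Hom C X Y"
  shows "cmp C f (mneg C g) = mneg C (cmp C f g)"
proof -
  have n: "mneg C g \<in> Hom C X Y" using neg_hom g by blast
  have X: "X \<in> Ob C" using g hom_ob by blast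
  have "madd C (cmp C f g) (cmp C f (mneg C g)) = cmp C f (madd C g (mneg C g))"
    using distl[OF g n f] by simp
  also have "\<dots> = mzero C X Z" using add_neg[OF g] cmp_zero_r[OF f X] by simp
  finally show ?thesis using neg_uniq[OF cmp_hom[OF g f] cmp_hom[OF n f]] by simp
qed

lemma sub_zero: assumes f: "f \<in> Hom C X Y" and g: "g \<in> Hom C X Y"
  and s: "madd C f (mneg C g) = mzero C X Y"
  shows "f = g"
proof -
  have n: "mneg C g \<in> Hom C X Y" using neg_hom g by blast
  have "madd C (mneg C g) f = mzero C X Y" using s add_comm[OF f n] by simp
  hence "f = mneg C (mneg C g)" using neg_uniq[OF n f] by simp
  thus ?thesis using neg_neg[OF g] by simp
qed

lemma Sh_bij: "bij_betw (Sh C) (Ob C) (Ob C)" using tri unfolding is_triangulated_def by (elim conjE) assumption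
lemma Shm_bij: assumes "X \<in> Ob C" "Y \<in> Ob C" shows "bij_betw (Shm C) (Hom C X Y) (Hom C (Sh C X) (Sh C Y))"
proof -
  have h: "\<forall>X\<in>Ob C. \<forall>Y\<in>Ob C. bij_betw (Shm C) (Hom C X Y) (Hom C (Sh C X) (Sh C Y))"
    using tri unfolding is_triangulated_def by (elim conjE) assumption
  show ?thesis using bspec[OF bspec[OF h assms(1)] assms(2)] .
qed
lemma Sh_ob: "X \<in> Ob C \<Longrightarrow> Sh C X \<in> Ob C" using Sh_bij bij_betwE by blast
lemma Sh_surj: assumes "T \<in> Ob C" shows "\<exists>X\<in>Ob C. T = Sh C X"
proof -
  have "T \<in> Sh C ` Ob C" using Sh_bij assms unfolding bij_betw_def by simp
  thus ?thesis by blast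
qed
lemma Shm_hom: assumes "f \<in> Hom C X Y" shows "Shm C f \<in> Hom C (Sh C X) (Sh C Y)"
proof -
  have "X \<in> Ob C" "Y \<in> Ob C" using hom_ob assms by auto
  thus ?thesis using Shm_bij assms bij_betwE by blast
qed
lemma Shm_inj: assumes "f \<in> Hom C X Y" "g \<in> Hom C X Y" "Shm C f = Shm C g" shows "f = g"
proof -
  have "X \<in> Ob C" "Y \<in> Ob C" using hom_ob assms by auto
  hence "inj_on (Shm C) (Hom C X Y)" using Shm_bij unfolding bij_betw_def by blast
  thus ?thesis using assms inj_onD by metis
qed
lemma Shm_surj: assumes "X \<in> Ob C" "Y \<in> Ob C" "k \<in> Hom C (Sh C X) (Sh C Y)" shows "\<exists>k'\<in>Hom C X Y. k = Shm C k'"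
proof -
  have "k \<in> Shm C ` Hom C X Y" using Shm_bij[OF assms(1,2)] assms(3) unfolding bij_betw_def by simp
  thus ?thesis by blast
qed
lemma Shm_id: assumes "X \<in> Ob C" shows "Shm C (idm C X) = idm C (Sh C X)"
proof -
  have h: "\<forall>X\<in>Ob C. Shm C (idm C X) = idm C (Sh C X)"
    using tri unfolding is_triangulated_def by (elim conjE) assumption
  show ?thesis using bspec[OF h assms] .
qed
lemma Shm_cmp: assumes "f \<in> Hom C X Y" "g \<in> Hom C Y Z" shows "Shm C (cmp C g f) = cmp C (Shm C g) (Shm C f)"
proof -
  have h: "\<forall>X Y Z f g. f \<in> Hom C X Y \<longrightarrow> g \<in> Hom C Y Z \<longrightarrow>
        Shm C (cmp C g f) = cmp C (Shm C g) (Shm C f)"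
    using tri unfolding is_triangulated_def by (elim conjE) assumption
  show ?thesis using h[rule_format, OF assms] .
qed
lemma Shm_add: assumes "f \<in> Hom C X Y" "g \<in> Hom C X Y" shows "Shm C (madd C f g) = madd C (Shm C f) (Shm C g)"
proof -
  have h: "\<forall>X Y f g. f \<in> Hom C X Y \<longrightarrow> g \<in> Hom C X Y \<longrightarrow>
        Shm C (madd C f g) = madd C (Shm C f) (Shm C g)"
    using tri unfolding is_triangulated_def by (elim conjE) assumption
  show ?thesis using h[rule_format, OF assms] .
qed

lemma Shm_zero: assumes "X \<in> Ob C" "Y \<in> Ob C" shows "Shm C (mzero C X Y) = mzero C (Sh C X) (Sh C Y)"
proof -
  have z: "mzero C X Y \<in> Hom C X Y" using assms zero_hom by blast
  have "Shm C (mzero C X Y) = Shm C (madd C (mzero C X Y) (mzero C X Y))" using zero_add z by metis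
  also have "\<dots> = madd C (Shm C (mzero C X Y)) (Shm C (mzero C X Y))" using Shm_add z by blast
  finally show ?thesis using idem_zero[OF Shm_hom[OF z]] by simp
qed

lemma Shm_neg: assumes "f \<in> Hom C X Y" shows "Shm C (mneg C f) = mneg C (Shm C f)"
proof -
  have n: "mneg C f \<in> Hom C X Y" using neg_hom assms by blast
  have o: "X \<in> Ob C" "Y \<in> Ob C" using hom_ob assms by auto
  have "madd C (Shm C f) (Shm C (mneg C f)) = Shm C (madd C f (mneg C f))"
    using Shm_add[OF assms n] by simp
  also have "\<dots> = mzero C (Sh C X) (Sh C Y)" using add_neg[OF assms] Shm_zero[OF o] by simp
  finally show ?thesis using neg_uniq[OF Shm_hom[OF assms] Shm_hom[OF n]] by simp
qed

lemma dist_tri: assumes "(X,Y,Z,u,v,w) \<in> Dist C" shows "u \<in> Hom C X Y \<and> v \<in> Hom C Y Z \<and> w \<in> Hom C Z (Sh C X)"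
proof -
  have h: "\<forall>T\<in>Dist C. is_triangle C T"
    using tri unfolding is_triangulated_def by (elim conjE) assumption
  show ?thesis using bspec[OF h assms] unfolding is_triangle_def by simp
qed
lemma rot: "(X,Y,Z,u,v,w) \<in> Dist C \<Longrightarrow> (Y, Z, Sh C X, v, w, mneg C (Shm C u)) \<in> Dist C"
proof -
  assume d: "(X,Y,Z,u,v,w) \<in> Dist C"
  hence "is_triangle C (X,Y,Z,u,v,w)" using dist_tri unfolding is_triangle_def by auto
  moreover have h: "\<forall>X Y Z u v w. is_triangle C (X,Y,Z,u,v,w) \<longrightarrow>
        ((X,Y,Z,u,v,w) \<in> Dist C \<longleftrightarrow> (Y, Z, Sh C X, v, w, mneg C (Shm C u)) \<in> Dist C)"
    using tri unfolding is_triangulated_def by (elim conjE) assumption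
  ultimately show ?thesis using d by blast
qed
lemma TR3: "(X,Y,Z,u,v,w) \<in> Dist C \<Longrightarrow> (X',Y',Z',u',v',w') \<in> Dist C \<Longrightarrow>
        a \<in> Hom C X X' \<Longrightarrow> b \<in> Hom C Y Y' \<Longrightarrow> cmp C b u = cmp C u' a \<Longrightarrow>
        (\<exists>c\<in>Hom C Z Z'. cmp C c v = cmp C v' b \<and> cmp C (Shm C a) w = cmp C w' c)"
proof -
  assume a: "(X,Y,Z,u,v,w) \<in> Dist C" "(X',Y',Z',u',v',w') \<in> Dist C"
        "a \<in> Hom C X X'" "b \<in> Hom C Y Y'" "cmp C b u = cmp C u' a"
  have h: "\<forall>X Y Z u v w X' Y' Z' u' v' w' a b.
        (X,Y,Z,u,v,w) \<in> Dist C \<longrightarrow> (X',Y',Z',u',v',w') \<in> Dist C \<longrightarrow>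
        a \<in> Hom C X X' \<longrightarrow> b \<in> Hom C Y Y' \<longrightarrow> cmp C b u = cmp C u' a \<longrightarrow>
        (\<exists>c\<in>Hom C Z Z'. cmp C c v = cmp C v' b \<and> cmp C (Shm C a) w = cmp C w' c)"
    using tri unfolding is_triangulated_def by (elim conjE) assumption
  show ?thesis using h[rule_format, OF a] .
qed
lemma zobj: "\<exists>Z. is_zero_obj C Z" using add unfolding is_additive_def by (elim conjE) assumption
lemma triv_dist: "X \<in> Ob C \<Longrightarrow> is_zero_obj C Z \<Longrightarrow>
        (X, X, Z, idm C X, mzero C X Z, mzero C Z (Sh C X)) \<in> Dist C"
proof -
  assume a: "X \<in> Ob C" "is_zero_obj C Z"
  have h: "\<forall>X\<in>Ob C. \<forall>Z. is_zero_obj C Z \<longrightarrow>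
        (X, X, Z, idm C X, mzero C X Z, mzero C Z (Sh C X)) \<in> Dist C"
    using tri unfolding is_triangulated_def by (elim conjE) assumption
  show ?thesis using h a by blast
qed

lemma exact: assumes d: "(A,B,Cc,a,b,c) \<in> Dist C" and t: "t \<in> Hom C B T"
  and ta: "cmp C t a = mzero C A T"
  shows "\<exists>k\<in>Hom C Cc T. cmp C k b = t"
proof -
  have T: "T \<in> Ob C" using t hom_ob by blast
  obtain X where X: "X \<in> Ob C" "T = Sh C X" using Sh_surj T by blast
  obtain Z where Z: "is_zero_obj C Z" using zobj by blast
  have Zo: "Z \<in> Ob C" using Z unfolding is_zero_obj_def by blast
  have "(X, X, Z, idm C X, mzero C X Z, mzero C Z (Sh C X)) \<in> Dist C" using triv_dist X Z by blast
  hence "(X, Z, Sh C X, mzero C X Z, mzero C Z (Sh C X), mneg C (Shm C (idm C X))) \<in> Dist C"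
    by (rule rot)
  hence d2: "(Z, Sh C X, Sh C X, mzero C Z (Sh C X), mneg C (Shm C (idm C X)), mneg C (Shm C (mzero C X Z))) \<in> Dist C"
    by (rule rot)
  have ab: "a \<in> Hom C A B" "b \<in> Hom C B Cc" using dist_tri d by auto
  have Ao: "A \<in> Ob C" using ab hom_ob by blast
  have za: "mzero C A Z \<in> Hom C A Z" using Ao Zo zero_hom by blast
  have "cmp C (mzero C Z (Sh C X)) (mzero C A Z) = mzero C A (Sh C X)"
    using cmp_zero_l za X Sh_ob by blast
  hence sq: "cmp C t a = cmp C (mzero C Z (Sh C X)) (mzero C A Z)" using ta X by simp
  obtain c' where c': "c' \<in> Hom C Cc (Sh C X)"
     "cmp C c' b = cmp C (mneg C (Shm C (idm C X))) t"
    using TR3[OF d d2 za _ sq] t X by blast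
  have i: "idm C (Sh C X) \<in> Hom C (Sh C X) (Sh C X)" using id_hom Sh_ob X by blast
  have tt: "t \<in> Hom C B (Sh C X)" using t X by simp
  have "cmp C c' b = mneg C t" using c'(2) Shm_id[OF X(1)] cmp_neg_l[OF i tt] id_l[OF tt] by simp
  hence "cmp C (mneg C c') b = t" using cmp_neg_l[OF c'(1) ab(2)] neg_neg[OF tt] by simp
  moreover have "mneg C c' \<in> Hom C Cc T" using neg_hom c' X by blast
  ultimately show ?thesis by blast
qed

end



context TC
begin

lemma step_inj:
  assumes d: "(X,Y,D,u,v,w) \<in> Dist C" and Dz: "Hom C D T = {mzero C D T}"
    and h1: "h1 \<in> Hom C Y T" and h2: "h2 \<in> Hom C Y T" and eq: "cmp C h1 u = cmp C h2 u"
  shows "h1 = h2"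
proof -
  have uv: "u \<in> Hom C X Y" "v \<in> Hom C Y D" using dist_tri[OF d] by auto
  have n2: "mneg C h2 \<in> Hom C Y T" using neg_hom h2 by blast
  define k0 where "k0 = madd C h1 (mneg C h2)"
  have k0: "k0 \<in> Hom C Y T" unfolding k0_def using add_hom[OF h1 n2] .
  have h2u: "cmp C h2 u \<in> Hom C X T" using cmp_hom[OF uv(1) h2] .
  have "cmp C k0 u = madd C (cmp C h1 u) (cmp C (mneg C h2) u)"
    unfolding k0_def using distr[OF uv(1) h1 n2] .
  also have "\<dots> = madd C (cmp C h2 u) (mneg C (cmp C h2 u))" using eq cmp_neg_l[OF h2 uv(1)] by simp
  also have "\<dots> = mzero C X T" using add_neg[OF h2u] .
  finally have "cmp C k0 u = mzero C X T" .
  then obtain k where k: "k \<in> Hom C D T" "cmp C k v = k0" using exact[OF d k0] by blast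
  have T: "T \<in> Ob C" using h1 hom_ob by blast
  have "k = mzero C D T" using k(1) Dz by blast
  hence "k0 = mzero C Y T" using k(2) cmp_zero_l[OF uv(2) T] by simp
  thus ?thesis using sub_zero[OF h1 h2] unfolding k0_def by simp
qed

lemma step_surj:
  assumes d: "(X,Y,D,u,v,w) \<in> Dist C" and D': "D' \<in> Ob C" "D = Sh C D'"
    and Dz: "Hom C D' T = {mzero C D' T}" and T: "T \<in> Ob C"
    and h: "h \<in> Hom C X T"
  shows "\<exists>h'\<in>Hom C Y T. cmp C h' u = h"
proof -
  have uvw: "u \<in> Hom C X Y" "v \<in> Hom C Y D" "w \<in> Hom C D (Sh C X)" using dist_tri[OF d] by auto
  have XY: "X \<in> Ob C" "Y \<in> Ob C" using uvw hom_ob by auto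
  have d2: "(D, Sh C X, Sh C Y, w, mneg C (Shm C u), mneg C (Shm C v)) \<in> Dist C"
    using rot[OF rot[OF d]] .
  have t: "Shm C h \<in> Hom C (Sh C X) (Sh C T)" using Shm_hom[OF h] .
  have tw: "cmp C (Shm C h) w \<in> Hom C D (Sh C T)" using cmp_hom[OF uvw(3) t] .
  have img: "Hom C (Sh C D') (Sh C T) = Shm C ` Hom C D' T"
    using Shm_bij[OF D'(1) T] unfolding bij_betw_def by simp
  have "cmp C (Shm C h) w = Shm C (mzero C D' T)" using tw img Dz D'(2) by simp
  also have "\<dots> = mzero C D (Sh C T)" using Shm_zero[OF D'(1) T] D'(2) by simp
  finally have tw0: "cmp C (Shm C h) w = mzero C D (Sh C T)" .
  obtain k where k: "k \<in> Hom C (Sh C Y) (Sh C T)" "cmp C k (mneg C (Shm C u)) = Shm C h"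
    using exact[OF d2 t tw0] by blast
  obtain k' where k': "k' \<in> Hom C Y T" "k = Shm C k'" using Shm_surj[OF XY(2) T k(1)] by blast
  have k'u: "cmp C k' u \<in> Hom C X T" using cmp_hom[OF uvw(1) k'(1)] .
  have "cmp C k (mneg C (Shm C u)) = mneg C (cmp C (Shm C k') (Shm C u))"
    using cmp_neg_r[OF Shm_hom[OF k'(1)] Shm_hom[OF uvw(1)]] k'(2) by simp
  also have "\<dots> = mneg C (Shm C (cmp C k' u))" using Shm_cmp[OF uvw(1) k'(1)] by simp
  also have "\<dots> = Shm C (mneg C (cmp C k' u))" using Shm_neg[OF k'u] by simp
  finally have "Shm C (mneg C (cmp C k' u)) = Shm C h" using k(2) by simp
  hence e1: "mneg C (cmp C k' u) = h" using Shm_inj[OF neg_hom[OF k'u] h] by blast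
  have "cmp C (mneg C k') u = h" using cmp_neg_l[OF k'(1) uvw(1)] e1 by simp
  moreover have "mneg C k' \<in> Hom C Y T" using neg_hom k'(1) by blast
  ultimately show ?thesis by blast
qed

lemma cone_step:
  assumes gm: "good_metric C B" and c: "cone_in C E e n (B (Suc s))" and T: "T \<in> perp C (B s)"
  shows "(\<forall>h\<in>Hom C (E n) T. \<exists>h'\<in>Hom C (E (Suc n)) T. cmp C h' (e n) = h) \<and>
         (\<forall>h1\<in>Hom C (E (Suc n)) T. \<forall>h2\<in>Hom C (E (Suc n)) T. cmp C h1 (e n) = cmp C h2 (e n) \<longrightarrow> h1 = h2)"
proof -
  obtain Z v w where d: "(E n, E (Suc n), Z, e n, v, w) \<in> Dist C" and Z: "Z \<in> B (Suc s)"
    using c unfolding cone_in_def by blast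
  have g1: "B (Suc s) \<subseteq> Ob C \<and> (\<exists>Z\<in>B (Suc s). is_zero_obj C Z) \<and> ext_closed C (B (Suc s)) \<and>
     B (Suc (Suc s)) \<subseteq> B (Suc s) \<and>
     {X\<in>Ob C. Sh C X \<in> B (Suc (Suc s))} \<subseteq> B (Suc s) \<and> Sh C ` B (Suc (Suc s)) \<subseteq> B (Suc s)"
    using gm unfolding good_metric_def by (rule spec)
  have g0: "B s \<subseteq> Ob C \<and> (\<exists>Z\<in>B s. is_zero_obj C Z) \<and> ext_closed C (B s) \<and>
     B (Suc s) \<subseteq> B s \<and>
     {X\<in>Ob C. Sh C X \<in> B (Suc s)} \<subseteq> B s \<and> Sh C ` B (Suc s) \<subseteq> B s"
    using gm unfolding good_metric_def by (rule spec)
  have Zo: "Z \<in> Ob C" using g1 Z by blast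
  obtain D' where D': "D' \<in> Ob C" "Z = Sh C D'" using Sh_surj[OF Zo] by blast
  have D's: "D' \<in> B s" using g0 D' Z by blast
  have Zs: "Z \<in> B s" using g0 Z by blast
  have To: "T \<in> Ob C" using T unfolding perp_def by blast
  have HZ: "Hom C Z T = {mzero C Z T}" using T Zs unfolding perp_def by blast
  have HD: "Hom C D' T = {mzero C D' T}" using T D's unfolding perp_def by blast
  show ?thesis using step_inj[OF d HZ] step_surj[OF d D' HD To] by blast
qed

end



context TC
begin

context
  fixes E :: "nat \<Rightarrow> 'o" and e :: "nat \<Rightarrow> 'm"
  assumes seq: "is_seq C E e"
begin

lemma seq_ob: "E n \<in> Ob C" using seq unfolding is_seq_def by blast
lemma seq_hom: "e n \<in> Hom C (E n) (E (Suc n))" using seq unfolding is_seq_def by blast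

lemma trd_hom: "trd C E e n d \<in> Hom C (E n) (E (n + d))"
proof (induction d)
  case 0 then show ?case using id_hom[OF seq_ob] by simp
next
  case (Suc d)
  have "cmp C (e (n + d)) (trd C E e n d) \<in> Hom C (E n) (E (Suc (n + d)))"
    using cmp_hom[OF Suc seq_hom] .
  then show ?case by simp
qed

lemma trm_hom: "n \<le> k \<Longrightarrow> trm C E e n k \<in> Hom C (E n) (E k)"
  unfolding trm_def using trd_hom[of n "k - n"] by simp

lemma trm_refl: "trm C E e n n = idm C (E n)"
  unfolding trm_def by simp

lemma trm_Suc: "n \<le> k \<Longrightarrow> trm C E e n (Suc k) = cmp C (e k) (trm C E e n k)"
proof -
  assume "n \<le> k"
  hence "Suc k - n = Suc (k - n)" "n + (k - n) = k" by auto
  thus ?thesis unfolding trm_def by simp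
qed

lemma trm_trans_aux: "n \<le> k \<Longrightarrow> trm C E e n (k + d) = cmp C (trm C E e k (k + d)) (trm C E e n k)"
proof (induction d)
  case 0 then show ?case using id_l[OF trm_hom] trm_refl by simp
next
  case (Suc d)
  have a: "trm C E e n (k + Suc d) = cmp C (e (k + d)) (trm C E e n (k + d))"
    using trm_Suc[of n "k + d"] Suc.prems by simp
  have b: "trm C E e k (k + Suc d) = cmp C (e (k + d)) (trm C E e k (k + d))"
    using trm_Suc[of k "k + d"] by simp
  show ?case unfolding a b Suc.IH[OF Suc.prems]
    using assoc[OF trm_hom[OF Suc.prems] trm_hom[of k "k+d"] seq_hom[of "k+d"]] by simp
qed

lemma trm_trans: "n \<le> k \<Longrightarrow> k \<le> l \<Longrightarrow> trm C E e n l = cmp C (trm C E e k l) (trm C E e n k)"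
  using trm_trans_aux[of n k "l - k"] by simp

lemma rel_iff: "germ_rel C E e A (n,f) (m,g) \<longleftrightarrow> f \<in> Hom C A (E n) \<and> g \<in> Hom C A (E m) \<and>
     (\<exists>k\<ge>max n m. cmp C (trm C E e n k) f = cmp C (trm C E e m k) g)"
  unfolding germ_rel_def by simp

lemma rel_up:
  assumes f: "f \<in> Hom C A (E n)" and g: "g \<in> Hom C A (E m)" and k: "k \<ge> max n m"
    and eq: "cmp C (trm C E e n k) f = cmp C (trm C E e m k) g" and l: "l \<ge> k"
  shows "cmp C (trm C E e n l) f = cmp C (trm C E e m l) g"
proof -
  have nk: "n \<le> k" and mk: "m \<le> k" using k by auto
  have "cmp C (trm C E e n l) f = cmp C (cmp C (trm C E e k l) (trm C E e n k)) f"
    using trm_trans[OF nk l] by simp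
  also have "\<dots> = cmp C (trm C E e k l) (cmp C (trm C E e n k) f)"
    using assoc[OF f trm_hom[OF nk] trm_hom[OF l]] by simp
  also have "\<dots> = cmp C (trm C E e k l) (cmp C (trm C E e m k) g)" using eq by simp
  also have "\<dots> = cmp C (cmp C (trm C E e k l) (trm C E e m k)) g"
    using assoc[OF g trm_hom[OF mk] trm_hom[OF l]] by simp
  also have "\<dots> = cmp C (trm C E e m l) g" using trm_trans[OF mk l] by simp
  finally show ?thesis .
qed

lemma rel_refl: "f \<in> Hom C A (E n) \<Longrightarrow> germ_rel C E e A (n,f) (n,f)"
  unfolding rel_iff by auto

lemma rel_sym: "germ_rel C E e A p q \<Longrightarrow> germ_rel C E e A q p"
  unfolding germ_rel_def by (cases p; cases q) (auto simp: max.commute)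

lemma rel_trans:
  assumes r1: "germ_rel C E e A (n,f) (m,g)" and r2: "germ_rel C E e A (m,g) (l,h)"
  shows "germ_rel C E e A (n,f) (l,h)"
proof -
  obtain k1 where k1: "k1 \<ge> max n m" "cmp C (trm C E e n k1) f = cmp C (trm C E e m k1) g"
    and f: "f \<in> Hom C A (E n)" and g: "g \<in> Hom C A (E m)" using r1 unfolding rel_iff by blast
  obtain k2 where k2: "k2 \<ge> max m l" "cmp C (trm C E e m k2) g = cmp C (trm C E e l k2) h"
    and h: "h \<in> Hom C A (E l)" using r2 unfolding rel_iff by blast
  define K where "K = max k1 k2"
  have "cmp C (trm C E e n K) f = cmp C (trm C E e m K) g"
    using rel_up[OF f g k1] K_def by simp
  also have "\<dots> = cmp C (trm C E e l K) h"
    using rel_up[OF g h k2] K_def by simp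
  finally show ?thesis unfolding rel_iff using f h k1 k2 K_def
    by (intro conjI exI[of _ K]) auto
qed

lemma rel_transq: "germ_rel C E e A p q \<Longrightarrow> germ_rel C E e A q r \<Longrightarrow> germ_rel C E e A p r"
  using rel_trans by (cases p; cases q; cases r) blast

lemma germ_mem: "q \<in> germ C E e A p \<longleftrightarrow> germ_rel C E e A p q"
  unfolding germ_def by simp

lemma germ_eq: assumes "germ_rel C E e A p q" shows "germ C E e A p = germ C E e A q"
  unfolding germ_def using assms rel_sym rel_transq by blast

lemma germ_eqD: assumes f: "f \<in> Hom C A (E n)" and eq: "germ C E e A (n,f) = germ C E e A q"
  shows "germ_rel C E e A (n,f) q"
proof -
  have "(n,f) \<in> germ C E e A (n,f)" using germ_mem rel_refl[OF f] by blast
  hence "germ_rel C E e A q (n,f)" using eq germ_mem by simp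
  thus ?thesis using rel_sym by blast
qed

lemma rep_in: assumes f: "f \<in> Hom C A (E n)"
  shows "germ_rel C E e A (n,f) (rep (germ C E e A (n,f)))"
proof -
  have "(n,f) \<in> germ C E e A (n,f)" using germ_mem rel_refl[OF f] by blast
  hence "rep (germ C E e A (n,f)) \<in> germ C E e A (n,f)" unfolding rep_def by (rule someI)
  thus ?thesis using germ_mem by blast
qed

lemma car_iff: "x \<in> modCar (moco C E e) A \<longleftrightarrow> (\<exists>n f. f \<in> Hom C A (E n) \<and> x = germ C E e A (n,f))"
  unfolding moco_def by auto

lemma germ_car: "f \<in> Hom C A (E n) \<Longrightarrow> germ C E e A (n,f) \<in> modCar (moco C E e) A"
  using car_iff by blast

lemma car_rep: assumes x: "x \<in> modCar (moco C E e) A"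
  shows "snd (rep x) \<in> Hom C A (E (fst (rep x))) \<and> x = germ C E e A (fst (rep x), snd (rep x))"
proof -
  obtain n f where f: "f \<in> Hom C A (E n)" and xe: "x = germ C E e A (n,f)" using x car_iff by blast
  have r: "germ_rel C E e A (n,f) (fst (rep x), snd (rep x))" using rep_in[OF f] xe by simp
  hence "snd (rep x) \<in> Hom C A (E (fst (rep x)))" unfolding rel_iff by blast
  moreover have "x = germ C E e A (fst (rep x), snd (rep x))" using germ_eq[OF r] xe by simp
  ultimately show ?thesis by blast
qed

lemma rel_cmp: assumes r: "germ_rel C E e B (n,f) (m,g)" and h: "h \<in> Hom C A B"
  shows "germ_rel C E e A (n, cmp C f h) (m, cmp C g h)"
proof -
  obtain k where k: "k \<ge> max n m" "cmp C (trm C E e n k) f = cmp C (trm C E e m k) g"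
    and f: "f \<in> Hom C B (E n)" and g: "g \<in> Hom C B (E m)" using r unfolding rel_iff by blast
  have nk: "n \<le> k" and mk: "m \<le> k" using k by auto
  have "cmp C (trm C E e n k) (cmp C f h) = cmp C (cmp C (trm C E e n k) f) h"
    using assoc[OF h f trm_hom[OF nk]] .
  also have "\<dots> = cmp C (cmp C (trm C E e m k) g) h" using k by simp
  also have "\<dots> = cmp C (trm C E e m k) (cmp C g h)"
    using assoc[OF h g trm_hom[OF mk]] by simp
  finally show ?thesis unfolding rel_iff using cmp_hom[OF h f] cmp_hom[OF h g] k(1) by blast
qed

lemma act_germ: assumes f: "f \<in> Hom C B (E n)" and h: "h \<in> Hom C A B"
  shows "modAct (moco C E e) A B h (germ C E e B (n,f)) = germ C E e A (n, cmp C f h)"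
proof -
  let ?x = "germ C E e B (n,f)"
  have r: "germ_rel C E e B (n,f) (fst (rep ?x), snd (rep ?x))" using rep_in[OF f] by simp
  have "modAct (moco C E e) A B h ?x = germ C E e A (fst (rep ?x), cmp C (snd (rep ?x)) h)"
    unfolding moco_def by simp
  also have "\<dots> = germ C E e A (n, cmp C f h)"
    using germ_eq[OF rel_sym[OF rel_cmp[OF r h]]] by simp
  finally show ?thesis .
qed

lemma lift: assumes nk: "n \<le> k" and f: "f \<in> Hom C A (E n)"
  shows "germ C E e A (n,f) = germ C E e A (k, cmp C (trm C E e n k) f)"
proof -
  have t: "cmp C (trm C E e n k) f \<in> Hom C A (E k)" using cmp_hom[OF f trm_hom[OF nk]] .
  have "cmp C (trm C E e k k) (cmp C (trm C E e n k) f) = cmp C (trm C E e n k) f"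
    using trm_refl id_l[OF t] by simp
  hence "germ_rel C E e A (n,f) (k, cmp C (trm C E e n k) f)"
    unfolding rel_iff using f t nk by (intro conjI exI[of _ k]) auto
  thus ?thesis by (rule germ_eq)
qed

lemma add_same: assumes h1: "h1 \<in> Hom C A (E m)" and h2: "h2 \<in> Hom C A (E m)"
  shows "modAdd (moco C E e) A (germ C E e A (m,h1)) (germ C E e A (m,h2)) = germ C E e A (m, madd C h1 h2)"
proof -
  let ?x = "germ C E e A (m,h1)" and ?y = "germ C E e A (m,h2)"
  obtain n1 f1 where p1: "rep ?x = (n1,f1)" by (cases "rep ?x") auto
  obtain n2 f2 where p2: "rep ?y = (n2,f2)" by (cases "rep ?y") auto
  have r1: "germ_rel C E e A (m,h1) (n1,f1)" using rep_in[OF h1] p1 by simp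
  have r2: "germ_rel C E e A (m,h2) (n2,f2)" using rep_in[OF h2] p2 by simp
  obtain k1 where k1: "k1 \<ge> max m n1" "cmp C (trm C E e m k1) h1 = cmp C (trm C E e n1 k1) f1"
    and f1: "f1 \<in> Hom C A (E n1)" using r1 unfolding rel_iff by blast
  obtain k2 where k2: "k2 \<ge> max m n2" "cmp C (trm C E e m k2) h2 = cmp C (trm C E e n2 k2) f2"
    and f2: "f2 \<in> Hom C A (E n2)" using r2 unfolding rel_iff by blast
  define K where "K = max n1 n2"
  define S where "S = madd C (cmp C (trm C E e n1 K) f1) (cmp C (trm C E e n2 K) f2)"
  have n1K: "n1 \<le> K" and n2K: "n2 \<le> K" unfolding K_def by auto
  have a1: "cmp C (trm C E e n1 K) f1 \<in> Hom C A (E K)" using cmp_hom[OF f1 trm_hom[OF n1K]] .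
  have a2: "cmp C (trm C E e n2 K) f2 \<in> Hom C A (E K)" using cmp_hom[OF f2 trm_hom[OF n2K]] .
  have S: "S \<in> Hom C A (E K)" unfolding S_def using add_hom[OF a1 a2] .
  have "modAdd (moco C E e) A ?x ?y = germ C E e A (K, S)"
    unfolding moco_def S_def K_def using p1 p2 by (simp add: Let_def)
  also have "\<dots> = germ C E e A (m, madd C h1 h2)"
  proof (rule germ_eq)
    define L where "L = max (max k1 k2) K"
    have KL: "K \<le> L" and mL: "m \<le> L" using k1 unfolding L_def by auto
    have e1: "cmp C (trm C E e m L) h1 = cmp C (trm C E e n1 L) f1"
      using rel_up[OF h1 f1 k1] L_def by simp
    have e2: "cmp C (trm C E e m L) h2 = cmp C (trm C E e n2 L) f2"
      using rel_up[OF h2 f2 k2] L_def by simp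
    have c1: "cmp C (trm C E e K L) (cmp C (trm C E e n1 K) f1) = cmp C (trm C E e n1 L) f1"
      using assoc[OF f1 trm_hom[OF n1K] trm_hom[OF KL]] trm_trans[OF n1K KL] by simp
    have c2: "cmp C (trm C E e K L) (cmp C (trm C E e n2 K) f2) = cmp C (trm C E e n2 L) f2"
      using assoc[OF f2 trm_hom[OF n2K] trm_hom[OF KL]] trm_trans[OF n2K KL] by simp
    have "cmp C (trm C E e K L) S = madd C (cmp C (trm C E e n1 L) f1) (cmp C (trm C E e n2 L) f2)"
      unfolding S_def using distl[OF a1 a2 trm_hom[OF KL]] c1 c2 by simp
    also have "\<dots> = cmp C (trm C E e m L) (madd C h1 h2)"
      using distl[OF h1 h2 trm_hom[OF mL]] e1 e2 by simp
    finally have "cmp C (trm C E e K L) S = cmp C (trm C E e m L) (madd C h1 h2)" .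
    moreover have "L \<ge> max K m" using KL mL by simp
    ultimately show "germ_rel C E e A (K, S) (m, madd C h1 h2)"
      unfolding rel_iff using S add_hom[OF h1 h2] by blast
  qed
  finally show ?thesis .
qed

end
end



lemma mh_car: "mod_hom C M N \<eta> \<Longrightarrow> A \<in> Ob C \<Longrightarrow> x \<in> modCar M A \<Longrightarrow> \<eta> A x \<in> modCar N A"
  unfolding mod_hom_def by blast
lemma mh_add: "mod_hom C M N \<eta> \<Longrightarrow> A \<in> Ob C \<Longrightarrow> x \<in> modCar M A \<Longrightarrow> y \<in> modCar M A \<Longrightarrow>
   \<eta> A (modAdd M A x y) = modAdd N A (\<eta> A x) (\<eta> A y)"
  unfolding mod_hom_def by blast
lemma mh_act: "mod_hom C M N \<eta> \<Longrightarrow> A \<in> Ob C \<Longrightarrow> B \<in> Ob C \<Longrightarrow> h \<in> Hom C A B \<Longrightarrow> x \<in> modCar M B \<Longrightarrow>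
   \<eta> A (modAct M A B h x) = modAct N A B h (\<eta> B x)"
  unfolding mod_hom_def by blast

lemma hom_mod_simps[simp]:
  "modCar (hom_mod C X) A = Hom C A X"
  "modAct (hom_mod C X) A B h g = cmp C g h"
  "modAdd (hom_mod C X) A g1 g2 = madd C g1 g2"
  unfolding hom_mod_def by simp_all

context TC
begin

lemma restr:
  assumes gm: "good_metric C B" and sE: "is_seq C E e"
    and N: "\<forall>n\<ge>N. cone_in C E e n (B (Suc s))" and T: "T \<in> perp C (B s)"
  shows "(\<forall>h\<in>Hom C (E N) T. \<exists>g\<in>Hom C (E (N + d)) T. cmp C g (trm C E e N (N + d)) = h) \<and>
    (\<forall>g1\<in>Hom C (E (N + d)) T. \<forall>g2\<in>Hom C (E (N + d)) T.
        cmp C g1 (trm C E e N (N + d)) = cmp C g2 (trm C E e N (N + d)) \<longrightarrow> g1 = g2)"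
proof (induction d)
  case 0
  have "\<forall>h\<in>Hom C (E N) T. cmp C h (trm C E e N N) = h"
    using trm_refl[OF sE] id_r by simp
  moreover have "\<forall>g1\<in>Hom C (E N) T. \<forall>g2\<in>Hom C (E N) T.
        cmp C g1 (trm C E e N N) = cmp C g2 (trm C E e N N) \<longrightarrow> g1 = g2"
    using trm_refl[OF sE] id_r by simp
  ultimately show ?case by auto
next
  case (Suc d)
  define k where "k = N + d"
  have Nk: "N \<le> k" unfolding k_def by simp
  have cs: "cone_in C E e k (B (Suc s))" using N Nk by blast
  note st = cone_step[OF gm cs T]
  have tS: "trm C E e N (N + Suc d) = cmp C (e k) (trm C E e N k)"
    using trm_Suc[OF sE Nk] unfolding k_def by simp
  have t: "trm C E e N k \<in> Hom C (E N) (E k)" using trm_hom[OF sE Nk] .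
  have ek: "e k \<in> Hom C (E k) (E (Suc k))" using seq_hom[OF sE] .
  have IH: "(\<forall>h\<in>Hom C (E N) T. \<exists>g\<in>Hom C (E k) T. cmp C g (trm C E e N k) = h) \<and>
    (\<forall>g1\<in>Hom C (E k) T. \<forall>g2\<in>Hom C (E k) T.
        cmp C g1 (trm C E e N k) = cmp C g2 (trm C E e N k) \<longrightarrow> g1 = g2)"
    using Suc.IH unfolding k_def .
  have S: "N + Suc d = Suc k" unfolding k_def by simp
  have A: "\<forall>h\<in>Hom C (E N) T. \<exists>g\<in>Hom C (E (Suc k)) T. cmp C g (cmp C (e k) (trm C E e N k)) = h"
  proof
    fix h assume h: "h \<in> Hom C (E N) T"
    obtain g where g: "g \<in> Hom C (E k) T" "cmp C g (trm C E e N k) = h" using IH[THEN conjunct1, rule_format, OF h] by blast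
    obtain g' where g': "g' \<in> Hom C (E (Suc k)) T" "cmp C g' (e k) = g" using st[THEN conjunct1, rule_format, OF g(1)] by blast
    have "cmp C g' (cmp C (e k) (trm C E e N k)) = h" using assoc[OF t ek g'(1)] g g' by simp
    thus "\<exists>g\<in>Hom C (E (Suc k)) T. cmp C g (cmp C (e k) (trm C E e N k)) = h" using g' by blast
  qed
  have B: "\<forall>g1\<in>Hom C (E (Suc k)) T. \<forall>g2\<in>Hom C (E (Suc k)) T.
        cmp C g1 (cmp C (e k) (trm C E e N k)) = cmp C g2 (cmp C (e k) (trm C E e N k)) \<longrightarrow> g1 = g2"
  proof (intro ballI impI)
    fix g1 g2 assume g1: "g1 \<in> Hom C (E (Suc k)) T" and g2: "g2 \<in> Hom C (E (Suc k)) T"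
      and eq: "cmp C g1 (cmp C (e k) (trm C E e N k)) = cmp C g2 (cmp C (e k) (trm C E e N k))"
    have "cmp C (cmp C g1 (e k)) (trm C E e N k) = cmp C (cmp C g2 (e k)) (trm C E e N k)"
      using eq assoc[OF t ek g1] assoc[OF t ek g2] by simp
    hence "cmp C g1 (e k) = cmp C g2 (e k)" by (rule IH[THEN conjunct2, rule_format, OF cmp_hom[OF ek g1] cmp_hom[OF ek g2]])
    thus "g1 = g2" by (rule st[THEN conjunct2, rule_format, OF g1 g2])
  qed
  show ?case unfolding S trm_Suc[OF sE Nk] using conjI[OF A B] .
qed

lemma restr':
  assumes gm: "good_metric C B" and sE: "is_seq C E e"
    and N: "\<forall>n\<ge>N. cone_in C E e n (B (Suc s))" and T: "T \<in> perp C (B s)" and k: "N \<le> k"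
  shows "(\<forall>h\<in>Hom C (E N) T. \<exists>g\<in>Hom C (E k) T. cmp C g (trm C E e N k) = h) \<and>
    (\<forall>g1\<in>Hom C (E k) T. \<forall>g2\<in>Hom C (E k) T.
        cmp C g1 (trm C E e N k) = cmp C g2 (trm C E e N k) \<longrightarrow> g1 = g2)"
  using restr[OF gm sE N T, of "k - N"] k by simp

end



context TC
begin

lemma main:
  assumes gm: "good_metric C B" and sE: "is_seq C E e" and sF: "is_seq C F f"
    and N: "\<forall>n\<ge>N. cone_in C E e n (B (Suc s))"
    and perpF: "\<forall>n. F n \<in> perp C (B s)"
    and iso: "mod_iso C (moco C E e) (moco C F f)"
  shows "\<exists>X\<in>Ob C. direct_summand C (moco C E e) (hom_mod C X)"
proof -
  obtain \<eta> \<theta> where eta: "mod_hom C (moco C E e) (moco C F f) \<eta>"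
    and theta: "mod_hom C (moco C F f) (moco C E e) \<theta>"
    and te: "\<forall>A\<in>Ob C. \<forall>x\<in>modCar (moco C E e) A. \<theta> A (\<eta> A x) = x"
    using iso unfolding mod_iso_def apply (elim exE conjE) apply (rule that) apply assumption+ done
  let ?tE = "trm C E e" and ?tF = "trm C F f"
  have EN: "E N \<in> Ob C" using seq_ob[OF sE] .
  have idN: "idm C (E N) \<in> Hom C (E N) (E N)" using id_hom[OF EN] .
  define y0 where "y0 = \<eta> (E N) (germ C E e (E N) (N, idm C (E N)))"
  have y0c: "y0 \<in> modCar (moco C F f) (E N)"
    unfolding y0_def using mh_car[OF eta EN germ_car[OF sE idN]] .
  define m where "m = fst (rep y0)"
  define g0 where "g0 = snd (rep y0)"
  have g0: "g0 \<in> Hom C (E N) (F m)"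
    unfolding m_def g0_def using car_rep[OF sF y0c, THEN conjunct1] .
  have y0e: "y0 = germ C F f (E N) (m, g0)"
    unfolding m_def g0_def using car_rep[OF sF y0c, THEN conjunct2] .
  have Fm: "F m \<in> perp C (B s)" using perpF by blast
  have Fmo: "F m \<in> Ob C" using seq_ob[OF sF] .
  define G where "G k = (SOME g. g \<in> Hom C (E k) (F m) \<and> cmp C g (?tE N k) = g0)" for k
  have Gp: "G k \<in> Hom C (E k) (F m) \<and> cmp C (G k) (?tE N k) = g0" if k: "N \<le> k" for k
  proof -
    have "\<exists>g\<in>Hom C (E k) (F m). cmp C g (?tE N k) = g0"
      using restr'[OF gm sE N Fm k, THEN conjunct1, rule_format, OF g0] .
    hence "\<exists>g. g \<in> Hom C (E k) (F m) \<and> cmp C g (?tE N k) = g0" by blast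
    thus ?thesis unfolding G_def by (rule someI_ex)
  qed
  have Ginj: "g1 = g2" if k: "N \<le> k" and g1: "g1 \<in> Hom C (E k) T" and g2: "g2 \<in> Hom C (E k) T"
    and T: "T \<in> perp C (B s)" and eq: "cmp C g1 (?tE N k) = cmp C g2 (?tE N k)" for k g1 g2 T
    using restr'[OF gm sE N T k, THEN conjunct2, rule_format, OF g1 g2 eq] .
  have Gc: "cmp C (G l) (?tE k l) = G k" if kl: "N \<le> k" "k \<le> l" for k l
  proof -
    have Nl: "N \<le> l" using kl by simp
    have h1: "cmp C (G l) (?tE k l) \<in> Hom C (E k) (F m)"
      using cmp_hom[OF trm_hom[OF sE kl(2)]] Gp[OF Nl] by blast
    have "cmp C (cmp C (G l) (?tE k l)) (?tE N k) = cmp C (G l) (cmp C (?tE k l) (?tE N k))"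
      using assoc[OF trm_hom[OF sE kl(1)] trm_hom[OF sE kl(2)] Gp[OF Nl, THEN conjunct1]] by simp
    also have "\<dots> = cmp C (G l) (?tE N l)" using trm_trans[OF sE kl] by simp
    also have "\<dots> = cmp C (G k) (?tE N k)" using Gp[OF Nl] Gp[OF kl(1)] by simp
    finally show ?thesis using Ginj[OF kl(1) h1 Gp[OF kl(1), THEN conjunct1] Fm] by simp
  qed
  define V where "V j a = cmp C (G (max j N)) (cmp C (?tE j (max j N)) a)" for j a
  have Vl: "V j a = cmp C (G l) (cmp C (?tE j l) a)" if a: "a \<in> Hom C A (E j)" and l: "max j N \<le> l" for A j a l
  proof -
    let ?K = "max j N"
    have jK: "j \<le> ?K" and NK: "N \<le> ?K" and Kl: "?K \<le> l" and Nl: "N \<le> l" and jl: "j \<le> l" using l by auto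
    have "cmp C (G l) (cmp C (?tE j l) a) = cmp C (G l) (cmp C (cmp C (?tE ?K l) (?tE j ?K)) a)"
      using trm_trans[OF sE jK Kl] by simp
    also have "\<dots> = cmp C (G l) (cmp C (?tE ?K l) (cmp C (?tE j ?K) a))"
      using assoc[OF a trm_hom[OF sE jK] trm_hom[OF sE Kl]] by simp
    also have "\<dots> = cmp C (cmp C (G l) (?tE ?K l)) (cmp C (?tE j ?K) a)"
      using assoc[OF cmp_hom[OF a trm_hom[OF sE jK]] trm_hom[OF sE Kl] Gp[OF Nl, THEN conjunct1]] by simp
    also have "\<dots> = V j a" unfolding V_def using Gc[OF NK Kl] by simp
    finally show ?thesis by simp
  qed
  have Vh: "V j a \<in> Hom C A (F m)" if a: "a \<in> Hom C A (E j)" for A j a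
  proof -
    have NK: "N \<le> max j N" and jK: "j \<le> max j N" by auto
    show ?thesis unfolding V_def using cmp_hom[OF cmp_hom[OF a trm_hom[OF sE jK]] Gp[OF NK, THEN conjunct1]] .
  qed
  have Vwd: "V j a = V j' a'" if r: "germ_rel C E e A (j,a) (j',a')" for A j a j' a'
  proof -
    obtain k where k: "k \<ge> max j j'" "cmp C (?tE j k) a = cmp C (?tE j' k) a'"
      and a: "a \<in> Hom C A (E j)" and a': "a' \<in> Hom C A (E j')" using r unfolding rel_iff[OF sE] by blast
    define l where "l = max k N"
    have "cmp C (?tE j l) a = cmp C (?tE j' l) a'" using rel_up[OF sE a a' k] l_def by simp
    moreover have jl: "max j N \<le> l" "max j' N \<le> l" using k unfolding l_def by auto
    moreover have "V j a = cmp C (G l) (cmp C (?tE j l) a)" using Vl[OF a jl(1)] .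
    moreover have "V j' a' = cmp C (G l) (cmp C (?tE j' l) a')" using Vl[OF a' jl(2)] .
    ultimately show ?thesis by simp
  qed
  define i :: "'o \<Rightarrow> (nat \<times> 'm) set \<Rightarrow> 'm" where "i A x = V (fst (rep x)) (snd (rep x))" for A x
  have igerm: "i A (germ C E e A (j,a)) = V j a" if a: "a \<in> Hom C A (E j)" for A j a
  proof -
    have "germ_rel C E e A (j,a) (fst (rep (germ C E e A (j,a))), snd (rep (germ C E e A (j,a))))"
      using rep_in[OF sE a] by simp
    from Vwd[OF this] show ?thesis unfolding i_def by simp
  qed
  have Vcmp: "V j (cmp C a h) = cmp C (V j a) h" if a: "a \<in> Hom C B' (E j)" and h: "h \<in> Hom C A B'" for A B' j a h
  proof -
    have jK: "j \<le> max j N" and NK: "N \<le> max j N" by auto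
    show ?thesis unfolding V_def
      using assoc[OF h a trm_hom[OF sE jK]] assoc[OF h cmp_hom[OF a trm_hom[OF sE jK]] Gp[OF NK, THEN conjunct1]] by simp
  qed
  have Vadd: "V (max n n') (madd C (cmp C (?tE n (max n n')) a) (cmp C (?tE n' (max n n')) b)) = madd C (V n a) (V n' b)"
    if a: "a \<in> Hom C A (E n)" and b: "b \<in> Hom C A (E n')" for A n n' a b
  proof -
    define K where "K = max n n'"
    define l where "l = max K N"
    have nK: "n \<le> K" and n'K: "n' \<le> K" and Kl: "K \<le> l" and Nl: "N \<le> l" unfolding K_def l_def by auto
    have a1: "cmp C (?tE n K) a \<in> Hom C A (E K)" using cmp_hom[OF a trm_hom[OF sE nK]] .
    have a2: "cmp C (?tE n' K) b \<in> Hom C A (E K)" using cmp_hom[OF b trm_hom[OF sE n'K]] .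
    have c1: "cmp C (?tE K l) (cmp C (?tE n K) a) = cmp C (?tE n l) a"
      using assoc[OF a trm_hom[OF sE nK] trm_hom[OF sE Kl]] trm_trans[OF sE nK Kl] by simp
    have c2: "cmp C (?tE K l) (cmp C (?tE n' K) b) = cmp C (?tE n' l) b"
      using assoc[OF b trm_hom[OF sE n'K] trm_hom[OF sE Kl]] trm_trans[OF sE n'K Kl] by simp
    have t1: "cmp C (?tE n l) a \<in> Hom C A (E l)" using cmp_hom[OF a trm_hom[OF sE]] nK Kl by simp
    have t2: "cmp C (?tE n' l) b \<in> Hom C A (E l)" using cmp_hom[OF b trm_hom[OF sE]] n'K Kl by simp
    have "V K (madd C (cmp C (?tE n K) a) (cmp C (?tE n' K) b))
        = cmp C (G l) (cmp C (?tE K l) (madd C (cmp C (?tE n K) a) (cmp C (?tE n' K) b)))"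
      using Vl[OF add_hom[OF a1 a2]] l_def by simp
    also have "\<dots> = cmp C (G l) (madd C (cmp C (?tE n l) a) (cmp C (?tE n' l) b))"
      using distl[OF a1 a2 trm_hom[OF sE Kl]] c1 c2 by simp
    also have "\<dots> = madd C (cmp C (G l) (cmp C (?tE n l) a)) (cmp C (G l) (cmp C (?tE n' l) b))"
      using distl[OF t1 t2 Gp[OF Nl, THEN conjunct1]] .
    also have "\<dots> = madd C (V n a) (V n' b)"
      using Vl[OF a, of l] Vl[OF b, of l] nK n'K Kl Nl by simp
    finally show ?thesis unfolding K_def .
  qed
  have key: "\<eta> (E k) (germ C E e (E k) (k, idm C (E k))) = germ C F f (E k) (m, G k)" if Nk: "N \<le> k" for k
  proof -
    let ?t = "?tE N k"
    have t: "?t \<in> Hom C (E N) (E k)" using trm_hom[OF sE Nk] .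
    have Ek: "E k \<in> Ob C" using seq_ob[OF sE] .
    have idk: "idm C (E k) \<in> Hom C (E k) (E k)" using id_hom[OF Ek] .
    have gk: "germ C E e (E k) (k, idm C (E k)) \<in> modCar (moco C E e) (E k)" using germ_car[OF sE idk] .
    define y1 where "y1 = \<eta> (E k) (germ C E e (E k) (k, idm C (E k)))"
    have y1c: "y1 \<in> modCar (moco C F f) (E k)" unfolding y1_def using mh_car[OF eta Ek gk] .
    define l1 where "l1 = fst (rep y1)"
    define u1 where "u1 = snd (rep y1)"
    have u1: "u1 \<in> Hom C (E k) (F l1)"
      unfolding l1_def u1_def using car_rep[OF sF y1c, THEN conjunct1] .
    have y1e: "y1 = germ C F f (E k) (l1, u1)"
      unfolding l1_def u1_def using car_rep[OF sF y1c, THEN conjunct2] .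
    have "modAct (moco C F f) (E N) (E k) ?t y1 = \<eta> (E N) (modAct (moco C E e) (E N) (E k) ?t (germ C E e (E k) (k, idm C (E k))))"
      unfolding y1_def using mh_act[OF eta EN Ek t gk] by simp
    also have "\<dots> = \<eta> (E N) (germ C E e (E N) (k, ?t))"
      using act_germ[OF sE idk t] id_l[OF t] by simp
    also have "germ C E e (E N) (k, ?t) = germ C E e (E N) (N, idm C (E N))"
      using lift[OF sE Nk idN] id_r[OF t] by simp
    finally have a1: "modAct (moco C F f) (E N) (E k) ?t y1 = germ C F f (E N) (m, g0)"
      using y0_def y0e by simp
    have "modAct (moco C F f) (E N) (E k) ?t y1 = germ C F f (E N) (l1, cmp C u1 ?t)"
      using y1e act_germ[OF sF u1 t] by simp
    hence eq1: "germ C F f (E N) (l1, cmp C u1 ?t) = germ C F f (E N) (m, cmp C (G k) ?t)"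
      using a1 Gp[OF Nk] by simp
    have r: "germ_rel C F f (E N) (l1, cmp C u1 ?t) (m, cmp C (G k) ?t)"
      using germ_eqD[OF sF cmp_hom[OF t u1] eq1] .
    obtain L where L: "L \<ge> max l1 m" "cmp C (?tF l1 L) (cmp C u1 ?t) = cmp C (?tF m L) (cmp C (G k) ?t)"
      using r unfolding rel_iff[OF sF] by blast
    have l1L: "l1 \<le> L" and mL: "m \<le> L" using L by auto
    have Gk: "G k \<in> Hom C (E k) (F m)" using Gp[OF Nk] by blast
    have p1: "cmp C (?tF l1 L) u1 \<in> Hom C (E k) (F L)" using cmp_hom[OF u1 trm_hom[OF sF l1L]] .
    have p2: "cmp C (?tF m L) (G k) \<in> Hom C (E k) (F L)" using cmp_hom[OF Gk trm_hom[OF sF mL]] .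
    have "cmp C (cmp C (?tF l1 L) u1) ?t = cmp C (cmp C (?tF m L) (G k)) ?t"
      using L(2) assoc[OF t u1 trm_hom[OF sF l1L]] assoc[OF t Gk trm_hom[OF sF mL]] by simp
    hence "cmp C (?tF l1 L) u1 = cmp C (?tF m L) (G k)"
      by (rule Ginj[OF Nk p1 p2 spec[OF perpF, of L]])
    hence "germ_rel C F f (E k) (l1, u1) (m, G k)"
      unfolding rel_iff[OF sF] using u1 Gk L(1) by (intro conjI exI[of _ L]) auto
    hence "y1 = germ C F f (E k) (m, G k)" using y1e germ_eq[OF sF] by simp
    thus ?thesis unfolding y1_def .
  qed
  have etax: "\<eta> A x = germ C F f A (m, i A x)" if A: "A \<in> Ob C" and x: "x \<in> modCar (moco C E e) A" for A x
  proof -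
    define j where "j = fst (rep x)"
    define a where "a = snd (rep x)"
    have a: "a \<in> Hom C A (E j)"
      unfolding j_def a_def using car_rep[OF sE x, THEN conjunct1] .
    have xe: "x = germ C E e A (j, a)"
      unfolding j_def a_def using car_rep[OF sE x, THEN conjunct2] .
    define K where "K = max j N"
    have jK: "j \<le> K" and NK: "N \<le> K" unfolding K_def by auto
    define a' where "a' = cmp C (?tE j K) a"
    have a': "a' \<in> Hom C A (E K)" unfolding a'_def using cmp_hom[OF a trm_hom[OF sE jK]] .
    have EK: "E K \<in> Ob C" using seq_ob[OF sE] .
    have idK: "idm C (E K) \<in> Hom C (E K) (E K)" using id_hom[OF EK] .
    have x2: "x = modAct (moco C E e) A (E K) a' (germ C E e (E K) (K, idm C (E K)))"
      using xe lift[OF sE jK a] act_germ[OF sE idK a'] id_l[OF a'] unfolding a'_def by simp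
    have "\<eta> A x = modAct (moco C F f) A (E K) a' (\<eta> (E K) (germ C E e (E K) (K, idm C (E K))))"
      using x2 mh_act[OF eta A EK a' germ_car[OF sE idK]] by simp
    also have "\<dots> = germ C F f A (m, cmp C (G K) a')"
      using key[OF NK] act_germ[OF sF _ a'] Gp[OF NK] by simp
    also have "cmp C (G K) a' = i A x"
      unfolding i_def a'_def K_def V_def j_def a_def by simp
    finally show ?thesis .
  qed
  define p :: "'o \<Rightarrow> 'm \<Rightarrow> (nat \<times> 'm) set" where "p A h = \<theta> A (germ C F f A (m, h))" for A h
  have ihom: "mod_hom C (moco C E e) (hom_mod C (F m)) i"
    unfolding mod_hom_def
  proof (intro ballI conjI)
    fix A assume A: "A \<in> Ob C"
    show "i A x \<in> modCar (hom_mod C (F m)) A" if x: "x \<in> modCar (moco C E e) A" for x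
      using Vh[OF car_rep[OF sE x, THEN conjunct1]] unfolding i_def by simp
    show "i A (modAdd (moco C E e) A x y) = modAdd (hom_mod C (F m)) A (i A x) (i A y)"
      if x: "x \<in> modCar (moco C E e) A" and y: "y \<in> modCar (moco C E e) A" for x y
    proof -
      define n where "n = fst (rep x)"
      define a where "a = snd (rep x)"
      define n' where "n' = fst (rep y)"
      define b where "b = snd (rep y)"
      have a: "a \<in> Hom C A (E n)" unfolding n_def a_def using car_rep[OF sE x, THEN conjunct1] .
      have b: "b \<in> Hom C A (E n')" unfolding n'_def b_def using car_rep[OF sE y, THEN conjunct1] .
      define K where "K = max n n'"
      have nK: "n \<le> K" and n'K: "n' \<le> K" unfolding K_def by auto
      have a1: "cmp C (?tE n K) a \<in> Hom C A (E K)" using cmp_hom[OF a trm_hom[OF sE nK]] .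
      have a2: "cmp C (?tE n' K) b \<in> Hom C A (E K)" using cmp_hom[OF b trm_hom[OF sE n'K]] .
      have "modAdd (moco C E e) A x y = germ C E e A (K, madd C (cmp C (?tE n K) a) (cmp C (?tE n' K) b))"
        unfolding moco_def K_def n_def a_def n'_def b_def by (simp add: Let_def)
      hence "i A (modAdd (moco C E e) A x y) = V K (madd C (cmp C (?tE n K) a) (cmp C (?tE n' K) b))"
        using igerm[OF add_hom[OF a1 a2]] by simp
      also have "\<dots> = madd C (V n a) (V n' b)" using Vadd[OF a b] unfolding K_def .
      finally show ?thesis unfolding i_def n_def a_def n'_def b_def by simp
    qed
    show "i A (modAct (moco C E e) A B' h x) = modAct (hom_mod C (F m)) A B' h (i B' x)"
      if B': "B' \<in> Ob C" and h: "h \<in> Hom C A B'" and x: "x \<in> modCar (moco C E e) B'" for B' h x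
    proof -
      define j where "j = fst (rep x)"
      define a where "a = snd (rep x)"
      have a: "a \<in> Hom C B' (E j)" unfolding j_def a_def using car_rep[OF sE x, THEN conjunct1] .
      have "modAct (moco C E e) A B' h x = germ C E e A (j, cmp C a h)"
        unfolding moco_def j_def a_def by simp
      hence "i A (modAct (moco C E e) A B' h x) = V j (cmp C a h)"
        using igerm[OF cmp_hom[OF h a]] by simp
      also have "\<dots> = cmp C (V j a) h" using Vcmp[OF a h] .
      finally show ?thesis unfolding i_def j_def a_def by simp
    qed
  qed
  have phom: "mod_hom C (hom_mod C (F m)) (moco C E e) p"
    unfolding mod_hom_def
  proof (intro ballI conjI)
    fix A assume A: "A \<in> Ob C"
    show "p A h \<in> modCar (moco C E e) A" if h: "h \<in> modCar (hom_mod C (F m)) A" for h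
      unfolding p_def using mh_car[OF theta A germ_car[OF sF]] h by simp
    show "p A (modAdd (hom_mod C (F m)) A h1 h2) = modAdd (moco C E e) A (p A h1) (p A h2)"
      if h1: "h1 \<in> modCar (hom_mod C (F m)) A" and h2: "h2 \<in> modCar (hom_mod C (F m)) A" for h1 h2
    proof -
      have h1': "h1 \<in> Hom C A (F m)" and h2': "h2 \<in> Hom C A (F m)" using h1 h2 by auto
      have "p A (modAdd (hom_mod C (F m)) A h1 h2) = \<theta> A (germ C F f A (m, madd C h1 h2))"
        unfolding p_def by simp
      also have "\<dots> = \<theta> A (modAdd (moco C F f) A (germ C F f A (m, h1)) (germ C F f A (m, h2)))"
        using add_same[OF sF h1' h2'] by simp
      also have "\<dots> = modAdd (moco C E e) A (p A h1) (p A h2)"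
        unfolding p_def using mh_add[OF theta A germ_car[OF sF h1'] germ_car[OF sF h2']] .
      finally show ?thesis .
    qed
    show "p A (modAct (hom_mod C (F m)) A B' h g) = modAct (moco C E e) A B' h (p B' g)"
      if B': "B' \<in> Ob C" and h: "h \<in> Hom C A B'" and g: "g \<in> modCar (hom_mod C (F m)) B'" for B' h g
    proof -
      have g': "g \<in> Hom C B' (F m)" using g by simp
      have "p A (modAct (hom_mod C (F m)) A B' h g) = \<theta> A (germ C F f A (m, cmp C g h))"
        unfolding p_def by simp
      also have "\<dots> = \<theta> A (modAct (moco C F f) A B' h (germ C F f B' (m, g)))"
        using act_germ[OF sF g' h] by simp
      also have "\<dots> = modAct (moco C E e) A B' h (p B' g)"
        unfolding p_def using mh_act[OF theta A B' h germ_car[OF sF g']] .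
      finally show ?thesis .
    qed
  qed
  have pi: "\<forall>A\<in>Ob C. \<forall>x\<in>modCar (moco C E e) A. p A (i A x) = x"
  proof (intro ballI)
    fix A x assume A: "A \<in> Ob C" and x: "x \<in> modCar (moco C E e) A"
    have "p A (i A x) = \<theta> A (\<eta> A x)" unfolding p_def using etax[OF A x] by simp
    also have "\<dots> = x" using te A x by blast
    finally show "p A (i A x) = x" .
  qed
  have "direct_summand C (moco C E e) (hom_mod C (F m))"
    unfolding direct_summand_def using ihom phom pi by blast
  thus ?thesis using Fmo by blast
qed

end


theorem lemma6p2:
  fixes C :: "('o,'m) tcat" and B :: "nat \<Rightarrow> 'o set"
    and E F :: "nat \<Rightarrow> 'o" and e f :: "nat \<Rightarrow> 'm" and s :: nat
  assumes "is_triangulated C"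
    and "good_metric C B"
    and "is_seq C E e"
    and "is_cauchy C B E e"
    and "compactly_supported C (B s) E e"
    and "is_seq C F f"
    and "\<forall>n. F n \<in> perp C (B s)"
    and "mod_iso C (moco C E e) (moco C F f)"
  shows "\<exists>X\<in>Ob C. direct_summand C (moco C E e) (hom_mod C X)"
proof -
  interpret TC C using assms(1) by unfold_locales
  obtain N where N: "\<forall>n\<ge>N. cone_in C E e n (B (Suc s))"
    using assms(4) unfolding is_cauchy_def by blast
  show ?thesis using main[OF assms(2) assms(3) assms(6) N assms(7) assms(8)] .
qed

end
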